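(* Assume $\phi$ satisfies (A2) and (A3) and that the gain matrix $V$ is irreducible. Then a point $q\in\mathcal F$ belongs to $\partial\mathcal F$ if and only if there exists a weight vector $w\in\mathbb R_{++}^K$ (i.e. $w>0$ entrywise) such that $q$ maximizes $x\mapsto w^Tx$ over $\mathcal F$.
   Context: Network model: $K\ge 2$ links, $\mathcal K=\{1,\dots,K\}$. Power vectors $p\in\mathbb R_+^K$. Power constraint set $\mathcal P=\{p\in\mathbb R_+^K: Cp\le\hat p\}$, where $C\in\{0,1\}^{N\times K}$ has at least one entry equal to $1$ in each column and $\hat p=(P_1,\dots,P_N)\in\mathbb R_{++}^N$; $\mathcal P_+=\mathcal P\cap\mathbb R_{++}^K$. Gain matrix $V=(v_{k,l})\in\mathbb R_+^{K\times K}$ with zero diagonal, noise vector $z\in\mathbb R_{++}^K$, and $\mathrm{SIR}_k(p)=p_k/((Vp)_k+z_k)$. SIR targets $\gamma_1,\dots,\gamma_K>0$. Assumption (A2): $\phi:\mathbb R_{++}\to\mathbb R$ is continuously differentiable and strictly increasing; let $\mathcal Q=\phi(\mathbb R_{++})$. Assumption (A3): the inverse function $\phi^{-1}:\mathcal Q\to\mathbb R_{++}$ is log-convex. Feasible QoS region: $\mathcal F=\{q\in\mathcal Q^K:\exists p\in\mathcal P_+ \text{ with } q_k=\phi(\mathrm{SIR}_k(p)/\gamma_k)\ \forall k\in\mathcal K\}$; for each $q\in\mathcal F$ the corresponding $p\in\mathcal P_+$ is unique. The boundary $\partial\mathcal F$ is defined as the set of $q\in\mathcal F$ whose corresponding power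 vector $p$ satisfies $Cp\le\hat p$ with equality in at least one component. *)

theory Defs
  imports "HOL-Analysis.Analysis"
begin

text \<open>Links are indexed by a finite type 'k (K = CARD('k)); power constraints by a
finite type 'n (N = CARD('n)). Vectors are elements of real^'k.\<close>

definition SIR :: "real^'k^'k \<Rightarrow> real^'k \<Rightarrow> 'k \<Rightarrow> real^'k \<Rightarrow> real" where
  "SIR V z k p = p$k / ((V *v p)$k + z$k)"

definition Pplus :: "real^'k^'n \<Rightarrow> real^'n \<Rightarrow> (real^'k) set" where
  "Pplus C phat = {p. (\<forall>k. p$k > 0) \<and> (\<forall>n. (C *v p)$n \<le> phat$n)}"

definition qos :: "(real \<Rightarrow> real) \<Rightarrow> real^'k^'k \<Rightarrow> real^'k \<Rightarrow> real^'k \<Rightarrow> real^'k \<Rightarrow> real^'k" where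
  "qos \<phi> V z \<gamma> p = (\<chi> k. \<phi> (SIR V z k p / \<gamma>$k))"

definition feasible_region ::
  "(real \<Rightarrow> real) \<Rightarrow> real^'k^'n \<Rightarrow> real^'n \<Rightarrow> real^'k^'k \<Rightarrow> real^'k \<Rightarrow> real^'k \<Rightarrow> (real^'k) set" where
  "feasible_region \<phi> C phat V z \<gamma> = {q. \<exists>p\<in>Pplus C phat. q = qos \<phi> V z \<gamma> p}"

definition feasible_boundary ::
  "(real \<Rightarrow> real) \<Rightarrow> real^'k^'n \<Rightarrow> real^'n \<Rightarrow> real^'k^'k \<Rightarrow> real^'k \<Rightarrow> real^'k \<Rightarrow> (real^'k) set" where
  "feasible_boundary \<phi> C phat V z \<gamma> =
     {q. \<exists>p\<in>Pplus C phat. q = qos \<phi> V z \<gamma> p \<and> (\<exists>n. (C *v p)$n = phat$n)}"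

definition irreducible_matrix :: "real^'k^'k \<Rightarrow> bool" where
  "irreducible_matrix V \<longleftrightarrow> (\<forall>k l. (k, l) \<in> {(i, j). V$i$j > 0}\<^sup>+)"

definition A2 :: "(real \<Rightarrow> real) \<Rightarrow> bool" where
  "A2 \<phi> \<longleftrightarrow> (\<exists>\<phi>'. (\<forall>x>0. (\<phi> has_real_derivative \<phi>' x) (at x)) \<and> continuous_on {0<..} \<phi>')
            \<and> strict_mono_on {0<..} \<phi>"

definition A3 :: "(real \<Rightarrow> real) \<Rightarrow> bool" where
  "A3 \<phi> \<longleftrightarrow> convex_on (\<phi> ` {0<..}) (\<lambda>x. ln (the_inv_into {0<..} \<phi> x))"

end

theory Submission
  imports Defs
begin


lemma three_slope:
  fixes u :: "real \<Rightarrow> real"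
  assumes "convex_on Q u" "y \<in> Q" "x \<in> Q" "y < t" "t < x"
  shows "(u t - u y)/(t - y) \<le> (u x - u t)/(x - t)"
proof -
  have 1: "(u y - u t) / (y - t) \<le> (u y - u x) / (y - x)"
   and 2: "(u y - u x) / (y - x) \<le> (u t - u x) / (t - x)"
    using convex_on_slope_le[OF assms(1,2,3,4,5)] by auto
  have "(u t - u y)/(t - y) = (u y - u t) / (y - t)" by (metis minus_diff_eq minus_divide_divide)
  moreover have "(u x - u t)/(x - t) = (u t - u x) / (t - x)" by (metis minus_diff_eq minus_divide_divide)
  ultimately show ?thesis using 1 2 by linarith
qed

lemma slope_exists:
  fixes u :: "real \<Rightarrow> real"
  assumes cv: "convex_on Q u" and aQ: "a \<in> Q" and bQ: "b \<in> Q" and q0Q: "q0 \<in> Q"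
    and aq: "a < q0" and qb: "q0 < b" and ua: "u a < u q0"
  shows "\<exists>c>0. \<forall>x\<in>Q. u q0 + c*(x - q0) \<le> u x"
proof -
  define S where "S = {(u q0 - u y)/(q0 - y) | y. y \<in> Q \<and> y < q0}"
  have aS: "(u q0 - u a)/(q0 - a) \<in> S" using aQ aq unfolding S_def by auto
  have ne: "S \<noteq> {}" using aS by auto
  have upx: "s \<le> (u x - u q0)/(x - q0)" if "s \<in> S" "x \<in> Q" "q0 < x" for s x
    using that three_slope[OF cv _ that(2) _ that(3)] unfolding S_def by auto
  have bdd: "bdd_above S" using upx[OF _ bQ qb] by (intro bdd_aboveI) auto
  define c where "c = Sup S"
  have "(u q0 - u a)/(q0 - a) \<le> c" unfolding c_def using cSup_upper[OF aS bdd] .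
  moreover have "(u q0 - u a)/(q0 - a) > 0" using ua aq by simp
  ultimately have cpos: "c > 0" by linarith
  have "u q0 + c*(x - q0) \<le> u x" if xQ: "x \<in> Q" for x
  proof (cases "x < q0")
    case True
    have "(u q0 - u x)/(q0 - x) \<in> S" using xQ True unfolding S_def by auto
    hence "(u q0 - u x)/(q0 - x) \<le> c" unfolding c_def using cSup_upper bdd by blast
    hence "u q0 - u x \<le> c * (q0 - x)" using True by (simp add: divide_le_eq)
    thus ?thesis by (simp add: algebra_simps)
  next
    case False
    show ?thesis
    proof (cases "x = q0")
      case True thus ?thesis by simp
    next
      case F2: False
      with False have gx: "q0 < x" by simp
      have "c \<le> (u x - u q0)/(x - q0)" unfolding c_def
        by (rule cSup_least[OF ne]) (use upx xQ gx in auto)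
      hence "c * (x - q0) \<le> u x - u q0" using gx by (simp add: le_divide_eq)
      thus ?thesis by simp
    qed
  qed
  thus ?thesis using cpos by blast
qed

lemma ln_I_bound:
  fixes v pl pl' :: "'k::finite \<Rightarrow> real"
  assumes v: "\<forall>l. v l \<ge> 0" and pl: "\<forall>l. pl l > 0" and pl': "\<forall>l. pl' l > 0" and zk: "zk > 0"
  shows "(\<Sum>l\<in>UNIV. v l * pl l * ln (pl' l / pl l)) / ((\<Sum>l\<in>UNIV. v l * pl l) + zk)
           \<le> ln (((\<Sum>l\<in>UNIV. v l * pl' l) + zk)/((\<Sum>l\<in>UNIV. v l * pl l) + zk))"
proof -
  define I where "I = (\<Sum>l\<in>UNIV. v l * pl l) + zk"
  define W where "W = (\<Sum>l\<in>UNIV. v l * pl l)"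
  define y where "y l = ln (pl' l / pl l)" for l
  define c where "c = (\<Sum>l\<in>UNIV. v l * pl l * y l) / I"
  have W0: "W \<ge> 0" unfolding W_def using v pl by (intro sum_nonneg mult_nonneg_nonneg) (auto intro: less_imp_le)
  have Ipos: "I > 0" using W0 zk unfolding I_def W_def by linarith
  have ple: "pl' l = pl l * exp (y l)" for l
    using pl[rule_format, of l] pl'[rule_format, of l] unfolding y_def by simp
  have ey: "exp (y l) \<ge> exp c * (1 + y l - c)" for l
  proof -
    have "1 + (y l - c) \<le> exp (y l - c)" by (rule exp_ge_add_one_self)
    hence "exp c * (1 + (y l - c)) \<le> exp c * exp (y l - c)" by simp
    also have "\<dots> = exp (y l)" by (simp add: exp_diff)
    finally show ?thesis by (simp add: algebra_simps)
  qed
  have "(\<Sum>l\<in>UNIV. v l * pl' l) = (\<Sum>l\<in>UNIV. v l * pl l * exp (y l))" by (simp add: ple mult.assoc)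
  also have "\<dots> \<ge> (\<Sum>l\<in>UNIV. v l * pl l * (exp c * (1 + y l - c)))"
    by (rule sum_mono, rule mult_left_mono[OF ey]) (use v pl in \<open>auto intro: mult_nonneg_nonneg less_imp_le\<close>)
  finally have s1: "(\<Sum>l\<in>UNIV. v l * pl' l) \<ge> exp c * (W + (\<Sum>l\<in>UNIV. v l * pl l * y l) - c * W)"
    by (simp add: W_def algebra_simps sum.distrib sum_distrib_left sum_distrib_right sum_subtractf)
  have sy: "(\<Sum>l\<in>UNIV. v l * pl l * y l) = c * I" unfolding c_def using Ipos by simp
  have "exp c * (1 - c) \<le> 1"
  proof -
    have "1 + (-c) \<le> exp (-c)" by (rule exp_ge_add_one_self)
    hence "exp c * (1 - c) \<le> exp c * exp (-c)" by simp
    thus ?thesis by (simp add: exp_minus)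
  qed
  hence "zk * (exp c * (1 - c)) \<le> zk" using zk by simp
  hence "exp c * I \<le> exp c * (W + c * I - c * W) + zk" unfolding I_def W_def[symmetric]
    by (simp add: algebra_simps)
  moreover from s1 have "exp c * (W + c * I - c * W) \<le> (\<Sum>l\<in>UNIV. v l * pl' l)" by (simp only: sy)
  ultimately have "exp c * I \<le> (\<Sum>l\<in>UNIV. v l * pl' l) + zk" by linarith
  hence "exp c \<le> ((\<Sum>l\<in>UNIV. v l * pl' l) + zk) / I" using Ipos by (simp add: le_divide_eq)
  hence "c \<le> ln (((\<Sum>l\<in>UNIV. v l * pl' l) + zk) / I)"
    using Ipos by (metis exp_gt_zero ln_exp ln_le_cancel_iff order_less_le_trans)
  thus ?thesis unfolding c_def I_def y_def by simp
qed



lemma subst_zero: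
  fixes B :: "'k::finite \<Rightarrow> 'k \<Rightarrow> real" and m :: "'k \<Rightarrow> real"
  assumes B0: "\<forall>k j. B k j \<ge> 0" and rs: "\<forall>k. (\<Sum>j\<in>UNIV. B k j) < 1"
    and m0: "\<forall>j. m j \<ge> 0" and mle: "\<forall>j. m j \<le> (\<Sum>k\<in>UNIV. m k * B k j)"
  shows "\<forall>j. m j = 0"
proof -
  have "(\<Sum>j\<in>UNIV. m j) \<le> (\<Sum>j\<in>UNIV. \<Sum>k\<in>UNIV. m k * B k j)"
    using mle by (intro sum_mono) auto
  also have "\<dots> = (\<Sum>k\<in>UNIV. m k * (\<Sum>j\<in>UNIV. B k j))"
    by (subst sum.swap) (simp add: sum_distrib_left)
  finally have "(\<Sum>k\<in>UNIV. m k * (1 - (\<Sum>j\<in>UNIV. B k j))) \<le> 0"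
    by (simp add: algebra_simps sum_subtractf)
  moreover have "\<forall>k. m k * (1 - (\<Sum>j\<in>UNIV. B k j)) \<ge> 0" using m0 rs
    by (simp add: less_imp_le)
  ultimately have "\<forall>k\<in>UNIV. m k * (1 - (\<Sum>j\<in>UNIV. B k j)) = 0"
    by (subst sum_nonneg_eq_0_iff[symmetric]) (auto intro: order_antisym sum_nonneg)
  thus ?thesis using rs by (metis UNIV_I diff_gt_0_iff_gt mult_eq_0_iff order_less_irrefl)
qed



lemma alpha_exists:
  fixes B :: "'k::finite \<Rightarrow> 'k \<Rightarrow> real" and d :: "'k \<Rightarrow> real"
  assumes B0: "\<forall>k j. B k j \<ge> 0" and rs: "\<forall>k. (\<Sum>j\<in>UNIV. B k j) < 1"
    and d0: "\<forall>j. d j \<ge> 0" and dpos: "\<exists>j. d j > 0"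
    and irr: "\<forall>k l. (k, l) \<in> {(i, j). B i j > 0}\<^sup>+"
  shows "\<exists>\<alpha>::'k\<Rightarrow>real. (\<forall>j. \<alpha> j > 0) \<and> (\<forall>j. \<alpha> j - (\<Sum>k\<in>UNIV. \<alpha> k * B k j) = d j)"
proof -
  define f :: "real^'k \<Rightarrow> real^'k" where "f x = (\<chi> j. x$j - (\<Sum>k\<in>UNIV. x$k * B k j))" for x
  have lin: "linear f"
  proof (rule linearI)
    show "f (x + y) = f x + f y" for x y
      unfolding f_def by (simp add: vec_eq_iff sum.distrib distrib_right)
    show "f (c *\<^sub>R x) = c *\<^sub>R f x" for c x
      unfolding f_def by (simp add: vec_eq_iff sum_distrib_left right_diff_distrib mult.assoc)
  qed
  have inj: "inj f"
  proof (rule linear_injective_0[OF lin, THEN iffD2], intro allI impI)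
    fix x assume "f x = 0"
    hence fj: "(f x)$j = 0" for j by simp
    have xe: "x$j = (\<Sum>k\<in>UNIV. x$k * B k j)" for j
      using fj[of j] unfolding f_def vec_lambda_beta by linarith
    have "\<forall>j. \<bar>x$j\<bar> \<le> (\<Sum>k\<in>UNIV. \<bar>x$k\<bar> * B k j)"
    proof
      fix j
      have "\<bar>x$j\<bar> \<le> (\<Sum>k\<in>UNIV. \<bar>x$k * B k j\<bar>)" by (subst xe) (rule sum_abs)
      also have "\<dots> = (\<Sum>k\<in>UNIV. \<bar>x$k\<bar> * B k j)" using B0 by (simp add: abs_mult)
      finally show "\<bar>x$j\<bar> \<le> (\<Sum>k\<in>UNIV. \<bar>x$k\<bar> * B k j)" .
    qed
    from subst_zero[OF B0 rs _ this] show "x = 0" by (simp add: vec_eq_iff)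
  qed
  have "surj f" by (rule linear_injective_imp_surjective[OF lin inj]) (rule refl)
  then obtain x where fx: "f x = (\<chi> j. d j)" by (metis surjE)
  hence fj: "(f x)$j = d j" for j by simp
  have xe: "x$j = (\<Sum>k\<in>UNIV. x$k * B k j) + d j" for j
    using fj[of j] unfolding f_def vec_lambda_beta by linarith
  define m where "m j = max 0 (- x$j)" for j
  have "\<forall>j. m j \<le> (\<Sum>k\<in>UNIV. m k * B k j)"
  proof
    fix j
    have R0: "0 \<le> (\<Sum>k\<in>UNIV. m k * B k j)" using B0 by (intro sum_nonneg) (simp add: m_def)
    have "- x$j \<le> (\<Sum>k\<in>UNIV. m k * B k j)"
    proof -
      have "- x$j = (\<Sum>k\<in>UNIV. (- x$k) * B k j) - d j" by (subst xe) (simp add: sum_negf)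
      also have "\<dots> \<le> (\<Sum>k\<in>UNIV. (- x$k) * B k j)" using d0 by simp
      also have "\<dots> \<le> (\<Sum>k\<in>UNIV. m k * B k j)"
        using B0 by (intro sum_mono mult_right_mono) (auto simp: m_def)
      finally show ?thesis .
    qed
    thus "m j \<le> (\<Sum>k\<in>UNIV. m k * B k j)" using R0 by (simp add: m_def)
  qed
  moreover have "\<forall>j. m j \<ge> 0" by (simp add: m_def)
  ultimately have mz: "\<forall>j. m j = 0" using subst_zero[OF B0 rs] by blast
  have x0: "\<forall>j. x$j \<ge> 0"
  proof
    fix j have "max 0 (- x$j) = 0" using mz m_def by metis
    thus "x$j \<ge> 0" by linarith
  qed
  have zprop: "x$k = 0" if "x$j = 0" "B k j > 0" for j k
  proof -
    have "(\<Sum>k\<in>UNIV. x$k * B k j) + d j = 0" using xe[of j] that by simp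
    moreover have "(\<Sum>k\<in>UNIV. x$k * B k j) \<ge> 0" using x0 B0 by (intro sum_nonneg) simp
    ultimately have "(\<Sum>k\<in>UNIV. x$k * B k j) = 0" using d0 by (smt (verit))
    hence "x$k * B k j = 0" using x0 B0 sum_nonneg_eq_0_iff[of UNIV "\<lambda>k. x$k * B k j"] by simp
    thus ?thesis using that by simp
  qed
  have xpos: "\<forall>j. x$j > 0"
  proof (rule ccontr)
    assume "\<not> (\<forall>j. x$j > 0)"
    then obtain j0 where j0: "x$j0 = 0" using x0 by (metis less_eq_real_def)
    have allz: "x$k = 0" for k
    proof -
      have "(k, j0) \<in> {(i, j). B i j > 0}\<^sup>+" using irr by blast
      thus ?thesis
      proof (induction rule: converse_trancl_induct)
        case (base y) thus ?case using zprop[OF j0] by simp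
      next
        case (step y z) thus ?case using zprop by simp
      qed
    qed
    obtain j where "d j > 0" using dpos by blast
    have "d j = x$j - (\<Sum>k\<in>UNIV. x$k * B k j)" using xe[of j] by linarith
    also have "\<dots> = 0" by (simp add: allz)
    finally show False using \<open>d j > 0\<close> by simp
  qed
  show ?thesis
  proof (intro exI[of _ "\<lambda>j. x$j"] conjI allI)
    show "x$j > 0" for j using xpos by simp
    show "x$j - (\<Sum>k\<in>UNIV. x$k * B k j) = d j" for j using xe[of j] by linarith
  qed
qed



lemma mv_nth: "((A::real^'k^'n) *v x)$i = (\<Sum>j\<in>UNIV. A$i$j * x$j)"
  by (simp add: matrix_vector_mult_def)

lemma Vp_nonneg:
  fixes V :: "real^'k^'k" and p :: "real^'k"
  assumes "\<forall>k l. V$k$l \<ge> 0" "\<forall>k. p$k > 0"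
  shows "(V *v p)$k \<ge> 0"
  unfolding mv_nth using assms by (intro sum_nonneg mult_nonneg_nonneg) (auto intro: less_imp_le)

lemma SIR_pos:
  fixes V :: "real^'k^'k" and p z :: "real^'k"
  assumes "\<forall>k l. V$k$l \<ge> 0" "\<forall>k. p$k > 0" "\<forall>k. z$k > 0"
  shows "SIR V z k p > 0"
proof -
  have "(V *v p)$k + z$k > 0" using Vp_nonneg[OF assms(1,2), of k] assms(3) by (smt (verit))
  thus ?thesis unfolding SIR_def using assms(2) by simp
qed

lemma up_direction:
  fixes \<phi> :: "real \<Rightarrow> real"
    and C :: "real^'k^'n" and phat :: "real^'n"
    and V :: "real^'k^'k" and z \<gamma> q w :: "real^'k"
  assumes C01: "\<forall>i j. C$i$j = 0 \<or> C$i$j = 1"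
    and V_nonneg: "\<forall>k l. V$k$l \<ge> 0"
    and z_pos: "\<forall>k. z$k > 0"
    and \<gamma>_pos: "\<forall>k. \<gamma>$k > 0"
    and sm: "strict_mono_on {0<..} \<phi>"
    and pP: "p \<in> Pplus C phat" and qd: "q = qos \<phi> V z \<gamma> p"
    and wpos: "\<forall>k. w$k > 0"
    and wmax: "\<forall>x \<in> feasible_region \<phi> C phat V z \<gamma>. w \<bullet> x \<le> w \<bullet> q"
  shows "q \<in> feasible_boundary \<phi> C phat V z \<gamma>"
proof (rule ccontr)
  assume nb: "q \<notin> feasible_boundary \<phi> C phat V z \<gamma>"
  have ppos: "\<forall>k. p$k > 0" and pc: "\<forall>n. (C *v p)$n \<le> phat$n" using pP by (auto simp: Pplus_def)
  have lt: "(C *v p)$n < phat$n" for n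
  proof -
    have "(C *v p)$n \<noteq> phat$n" using nb pP qd unfolding feasible_boundary_def by blast
    thus ?thesis using pc by (simp add: order_less_le)
  qed
  have Cnn: "C$i$j \<ge> 0" for i j using C01[rule_format, of i j] by auto
  have Cp0: "(C *v p)$n \<ge> 0" for n unfolding mv_nth using Cnn ppos
      by (intro sum_nonneg mult_nonneg_nonneg) (auto intro: less_imp_le)
  have hpos: "phat$n > 0" for n using Cp0[of n] lt[of n] by linarith
  define r where "r n = (C *v p)$n / phat$n" for n
  define m where "m = Max (range r)"
  have rle: "r n \<le> m" for n unfolding m_def by simp
  have "m \<in> range r" unfolding m_def by (rule Max_in) auto
  then obtain n1 where "m = r n1" by blast
  hence m1: "m < 1" and m0: "m \<ge> 0" using lt[of n1] hpos[of n1] Cp0[of n1] unfolding r_def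
    by (auto simp: divide_less_eq)
  define t where "t = 2 / (1 + m)"
  have t1: "t > 1" unfolding t_def using m1 m0 by (simp add: field_simps)
  have tm: "t * m \<le> 1" unfolding t_def using m1 m0 by (simp add: field_simps)
  define p' where "p' = t *\<^sub>R p"
  have p'P: "p' \<in> Pplus C phat"
    unfolding Pplus_def
  proof (intro CollectI conjI allI)
    show "p'$k > 0" for k unfolding p'_def using ppos t1 by simp
    show "(C *v p')$n \<le> phat$n" for n
    proof -
      have "(C *v p')$n = t * (C *v p)$n" unfolding p'_def by (simp add: matrix_vector_mult_scaleR)
      also have "\<dots> = t * (r n * phat$n)" unfolding r_def using hpos[of n] by simp
      also have "\<dots> \<le> t * (m * phat$n)" using rle[of n] hpos[of n] t1 by simp
      also have "\<dots> \<le> 1 * phat$n" using tm hpos[of n] by (simp add: mult.assoc[symmetric])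
      finally show ?thesis by simp
    qed
  qed
  have gt: "(qos \<phi> V z \<gamma> p')$k > q$k" for k
  proof -
    have Vp: "(V *v p)$k \<ge> 0" by (rule Vp_nonneg[OF V_nonneg ppos])
    have s1: "SIR V z k p > 0" by (rule SIR_pos[OF V_nonneg ppos z_pos])
    have "SIR V z k p' = t * p$k / (t * (V *v p)$k + z$k)"
      unfolding SIR_def p'_def by (simp add: matrix_vector_mult_scaleR)
    also have "\<dots> > p$k / ((V *v p)$k + z$k)"
    proof -
      have "p$k * (t * (V *v p)$k + z$k) < t * p$k * ((V *v p)$k + z$k)"
        using ppos[rule_format, of k] z_pos[rule_format, of k] t1 Vp
        by (simp add: algebra_simps)
      moreover have D1: "(V *v p)$k + z$k > 0" using Vp z_pos[rule_format, of k] by linarith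
      moreover have D2: "t * (V *v p)$k + z$k > 0" using Vp z_pos[rule_format, of k] t1
        by (smt (verit) mult_nonneg_nonneg)
      ultimately show ?thesis by (simp add: field_simps)
    qed
    finally have "SIR V z k p' > SIR V z k p" unfolding SIR_def .
    hence "SIR V z k p / \<gamma>$k < SIR V z k p' / \<gamma>$k" using \<gamma>_pos by (simp add: divide_strict_right_mono)
    moreover have "SIR V z k p / \<gamma>$k \<in> {0<..}" using s1 \<gamma>_pos by simp
    moreover have "SIR V z k p' / \<gamma>$k \<in> {0<..}" using calculation by (metis greaterThan_iff less_trans)
    ultimately have "\<phi> (SIR V z k p / \<gamma>$k) < \<phi> (SIR V z k p' / \<gamma>$k)"
      using sm by (meson strict_mono_onD)
    thus ?thesis unfolding qd qos_def by simp
  qed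
  have "w \<bullet> q < w \<bullet> qos \<phi> V z \<gamma> p'"
    unfolding inner_vec_def
    by (rule sum_strict_mono) (use wpos gt in auto)
  moreover have "qos \<phi> V z \<gamma> p' \<in> feasible_region \<phi> C phat V z \<gamma>"
    unfolding feasible_region_def using p'P by blast
  ultimately show False using wmax by fastforce
qed



lemma key_sum:
  fixes C :: "real^'k^'n" and phat :: "real^'n"
    and V :: "real^'k^'k" and z p0 p' :: "real^'k" and \<alpha> :: "'k \<Rightarrow> real"
  assumes C01: "\<forall>i j. C$i$j = 0 \<or> C$i$j = 1"
    and V_nonneg: "\<forall>k l. V$k$l \<ge> 0"
    and z_pos: "\<forall>k. z$k > 0"
    and p0pos: "\<forall>k. p0$k > 0" and p'pos: "\<forall>k. p'$k > 0"
    and tight: "(C *v p0)$n0 = phat$n0" and p'c: "(C *v p')$n0 \<le> phat$n0"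
    and apos: "\<forall>j. \<alpha> j > 0"
    and aeq: "\<forall>j. \<alpha> j - (\<Sum>k\<in>UNIV. \<alpha> k * (V$k$j * p0$j / ((V *v p0)$k + z$k))) = C$n0$j * p0$j"
  shows "(\<Sum>k\<in>UNIV. \<alpha> k * (ln (SIR V z k p') - ln (SIR V z k p0))) \<le> 0"
proof -
  define I where "I k = (V *v p0)$k + z$k" for k
  define I' where "I' k = (V *v p')$k + z$k" for k
  define B where "B k j = V$k$j * p0$j / I k" for k j
  define y where "y l = ln (p'$l / p0$l)" for l
  have Ipos: "I k > 0" for k unfolding I_def using Vp_nonneg[OF V_nonneg p0pos, of k] z_pos by smt
  have I'pos: "I' k > 0" for k unfolding I'_def using Vp_nonneg[OF V_nonneg p'pos, of k] z_pos by smt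
  have a: "ln (SIR V z k p') - ln (SIR V z k p0) \<le> y k - (\<Sum>l\<in>UNIV. B k l * y l)" for k
  proof -
    have bnd: "(\<Sum>l\<in>UNIV. V$k$l * p0$l * ln (p'$l / p0$l)) / ((\<Sum>l\<in>UNIV. V$k$l * p0$l) + z$k)
           \<le> ln (((\<Sum>l\<in>UNIV. V$k$l * p'$l) + z$k)/((\<Sum>l\<in>UNIV. V$k$l * p0$l) + z$k))"
      by (rule ln_I_bound) (use V_nonneg p0pos p'pos z_pos in auto)
    have "(\<Sum>l\<in>UNIV. B k l * y l) = (\<Sum>l\<in>UNIV. V$k$l * p0$l * y l) / I k"
      unfolding B_def by (simp add: sum_divide_distrib)
    also have "\<dots> \<le> ln (I' k / I k)" using bnd unfolding I_def I'_def y_def mv_nth .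
    also have "\<dots> = ln (I' k) - ln (I k)" using Ipos I'pos by (simp add: ln_divide_pos)
    finally have 1: "(\<Sum>l\<in>UNIV. B k l * y l) \<le> ln (I' k) - ln (I k)" .
    have "ln (SIR V z k p') = ln (p'$k) - ln (I' k)" unfolding SIR_def I'_def[symmetric]
      using p'pos I'pos by (simp add: ln_divide_pos)
    moreover have "ln (SIR V z k p0) = ln (p0$k) - ln (I k)" unfolding SIR_def I_def[symmetric]
      using p0pos Ipos by (simp add: ln_divide_pos)
    moreover have "y k = ln (p'$k) - ln (p0$k)" unfolding y_def using p0pos p'pos by (simp add: ln_divide_pos)
    ultimately show ?thesis using 1 by linarith
  qed
  have "(\<Sum>k\<in>UNIV. \<alpha> k * (ln (SIR V z k p') - ln (SIR V z k p0)))
        \<le> (\<Sum>k\<in>UNIV. \<alpha> k * (y k - (\<Sum>l\<in>UNIV. B k l * y l)))"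
    by (rule sum_mono, rule mult_left_mono[OF a]) (use apos in \<open>auto intro: less_imp_le\<close>)
  also have "\<dots> = (\<Sum>k\<in>UNIV. \<alpha> k * y k) - (\<Sum>k\<in>UNIV. \<Sum>l\<in>UNIV. \<alpha> k * B k l * y l)"
    by (simp add: right_diff_distrib sum_subtractf sum_distrib_left mult.assoc)
  also have "(\<Sum>k\<in>UNIV. \<Sum>l\<in>UNIV. \<alpha> k * B k l * y l) = (\<Sum>l\<in>UNIV. (\<Sum>k\<in>UNIV. \<alpha> k * B k l) * y l)"
    by (subst sum.swap) (simp add: sum_distrib_right)
  also have "(\<Sum>k\<in>UNIV. \<alpha> k * y k) - (\<Sum>l\<in>UNIV. (\<Sum>k\<in>UNIV. \<alpha> k * B k l) * y l)
      = (\<Sum>l\<in>UNIV. (\<alpha> l - (\<Sum>k\<in>UNIV. \<alpha> k * B k l)) * y l)"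
    by (simp add: left_diff_distrib sum_subtractf)
  also have "\<dots> = (\<Sum>l\<in>UNIV. C$n0$l * (p0$l * y l))"
  proof (rule sum.cong[OF refl])
    fix l
    have "\<alpha> l - (\<Sum>k\<in>UNIV. \<alpha> k * B k l) = C$n0$l * p0$l" using aeq unfolding B_def I_def by blast
    thus "(\<alpha> l - (\<Sum>k\<in>UNIV. \<alpha> k * B k l)) * y l = C$n0$l * (p0$l * y l)" by simp
  qed
  also have "\<dots> \<le> (\<Sum>l\<in>UNIV. C$n0$l * (p'$l - p0$l))"
  proof (rule sum_mono, rule mult_left_mono)
    fix l
    have "ln (p'$l / p0$l) \<le> p'$l / p0$l - 1" using p0pos p'pos by (intro ln_le_minus_one) simp
    hence "p0$l * y l \<le> p0$l * (p'$l / p0$l - 1)" unfolding y_def using p0pos by (simp add: less_imp_le)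
    also have "\<dots> = p'$l - p0$l" using p0pos[rule_format, of l] by (simp add: field_simps)
    finally show "p0$l * y l \<le> p'$l - p0$l" .
    show "0 \<le> C$n0$l" using C01[rule_format, of n0 l] by auto
  qed
  also have "\<dots> = (C *v p')$n0 - (C *v p0)$n0"
    unfolding mv_nth by (simp add: right_diff_distrib sum_subtractf)
  also have "\<dots> \<le> 0" using tight p'c by simp
  finally show ?thesis .
qed



lemma down_direction:
  fixes \<phi> :: "real \<Rightarrow> real"
    and C :: "real^'k^'n" and phat :: "real^'n"
    and V :: "real^'k^'k" and z \<gamma> q :: "real^'k"
  assumes C01: "\<forall>i j. C$i$j = 0 \<or> C$i$j = 1"
    and phat_pos: "\<forall>i. phat$i > 0"
    and V_nonneg: "\<forall>k l. V$k$l \<ge> 0"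
    and V_irr: "irreducible_matrix V"
    and z_pos: "\<forall>k. z$k > 0"
    and \<gamma>_pos: "\<forall>k. \<gamma>$k > 0"
    and sm: "strict_mono_on {0<..} \<phi>"
    and A3: "A3 \<phi>"
    and qB: "q \<in> feasible_boundary \<phi> C phat V z \<gamma>"
  shows "\<exists>w :: real^'k. (\<forall>k. w$k > 0) \<and>
            (\<forall>x \<in> feasible_region \<phi> C phat V z \<gamma>. w \<bullet> x \<le> w \<bullet> q)"
proof -
  obtain p0 n0 where p0P: "p0 \<in> Pplus C phat" and qd: "q = qos \<phi> V z \<gamma> p0"
    and tight: "(C *v p0)$n0 = phat$n0"
    using qB unfolding feasible_boundary_def by blast
  have p0pos: "\<forall>k. p0$k > 0" using p0P by (auto simp: Pplus_def)
  define I where "I k = (V *v p0)$k + z$k" for k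
  define B where "B k j = V$k$j * p0$j / I k" for k j
  define d where "d j = C$n0$j * p0$j" for j
  have Ipos: "I k > 0" for k unfolding I_def using Vp_nonneg[OF V_nonneg p0pos, of k] z_pos by smt
  have Cnn: "C$i$j \<ge> 0" for i j using C01[rule_format, of i j] by auto
  have B0: "\<forall>k j. B k j \<ge> 0" unfolding B_def using V_nonneg p0pos Ipos
    by (intro allI divide_nonneg_pos mult_nonneg_nonneg) (auto intro: less_imp_le)
  have rs: "\<forall>k. (\<Sum>j\<in>UNIV. B k j) < 1"
  proof
    fix k
    have "(\<Sum>j\<in>UNIV. B k j) = (V *v p0)$k / I k" unfolding B_def mv_nth by (simp add: sum_divide_distrib)
    also have "\<dots> < 1" using Ipos[of k] z_pos unfolding I_def by (simp add: divide_less_eq)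
    finally show "(\<Sum>j\<in>UNIV. B k j) < 1" .
  qed
  have d0: "\<forall>j. d j \<ge> 0" unfolding d_def using Cnn p0pos by (simp add: less_imp_le)
  have dpos: "\<exists>j. d j > 0"
  proof (rule ccontr)
    assume "\<not> (\<exists>j. d j > 0)"
    hence "\<forall>j. d j \<le> 0" using not_less by blast
    hence "(\<Sum>j\<in>UNIV. d j) \<le> 0" by (simp add: sum_nonpos)
    moreover have "(\<Sum>j\<in>UNIV. d j) = phat$n0" using tight unfolding d_def mv_nth by simp
    ultimately show False using phat_pos by (metis not_less)
  qed
  have Bpos_iff: "B i j > 0 \<longleftrightarrow> V$i$j > 0" for i j
  proof -
    have "B i j > 0 \<longleftrightarrow> V$i$j * p0$j > 0" unfolding B_def using Ipos[of i] by (simp add: zero_less_divide_iff)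
    also have "\<dots> \<longleftrightarrow> V$i$j > 0" using p0pos[rule_format, of j] by (simp add: zero_less_mult_iff)
    finally show ?thesis .
  qed
  have irr: "\<forall>k l. (k, l) \<in> {(i, j). B i j > 0}\<^sup>+"
    using V_irr unfolding irreducible_matrix_def Bpos_iff .
  obtain \<alpha> where apos: "\<forall>j. \<alpha> j > 0" and aeq: "\<forall>j. \<alpha> j - (\<Sum>k\<in>UNIV. \<alpha> k * B k j) = d j"
    using alpha_exists[OF B0 rs d0 dpos irr] by blast
  define Q where "Q = \<phi> ` {0<..}"
  define u where "u x = ln (the_inv_into {0<..} \<phi> x)" for x
  have cvx: "convex_on Q u" using A3 unfolding A3_def Q_def u_def by simp
  have injp: "inj_on \<phi> {0<..}" by (rule strict_mono_on_imp_inj_on[OF sm])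
  have uphi: "u (\<phi> t) = ln t" if "t > 0" for t
    unfolding u_def using the_inv_into_f_f[OF injp] that by simp
  define s where "s k = SIR V z k p0 / \<gamma>$k" for k
  have spos: "s k > 0" for k unfolding s_def using SIR_pos[OF V_nonneg p0pos z_pos, of k] \<gamma>_pos by simp
  have "\<exists>c>0. \<forall>x\<in>Q. u (\<phi> (s k)) + c*(x - \<phi> (s k)) \<le> u x" for k
  proof (rule slope_exists[OF cvx])
    have sk: "s k > 0" by (rule spos)
    show "\<phi> (s k / 2) \<in> Q" "\<phi> (2 * s k) \<in> Q" "\<phi> (s k) \<in> Q" unfolding Q_def using sk by auto
    show "\<phi> (s k / 2) < \<phi> (s k)" using sk by (intro strict_mono_onD[OF sm]) auto
    show "\<phi> (s k) < \<phi> (2 * s k)" using sk by (intro strict_mono_onD[OF sm]) auto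
    show "u (\<phi> (s k / 2)) < u (\<phi> (s k))" using sk by (simp add: uphi)
  qed
  then obtain c where cpos: "\<forall>k. c k > 0"
    and csup: "\<forall>k. \<forall>x\<in>Q. u (\<phi> (s k)) + c k*(x - \<phi> (s k)) \<le> u x"
    by metis
  define w :: "real^'k" where "w = (\<chi> k. \<alpha> k * c k)"
  have wpos: "\<forall>k. w$k > 0" unfolding w_def using apos cpos by simp
  have "w \<bullet> x \<le> w \<bullet> q" if xF: "x \<in> feasible_region \<phi> C phat V z \<gamma>" for x
  proof -
    obtain p' where p'P: "p' \<in> Pplus C phat" and xd: "x = qos \<phi> V z \<gamma> p'"
      using xF unfolding feasible_region_def by blast
    have p'pos: "\<forall>k. p'$k > 0" and p'c: "(C *v p')$n0 \<le> phat$n0" using p'P by (auto simp: Pplus_def)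
    define s' where "s' k = SIR V z k p' / \<gamma>$k" for k
    have s'pos: "s' k > 0" for k unfolding s'_def using SIR_pos[OF V_nonneg p'pos z_pos, of k] \<gamma>_pos by simp
    have xk: "x$k = \<phi> (s' k)" for k unfolding xd qos_def s'_def by simp
    have qk: "q$k = \<phi> (s k)" for k unfolding qd qos_def s_def by simp
    have each: "c k * (x$k - q$k) \<le> ln (SIR V z k p') - ln (SIR V z k p0)" for k
    proof -
      have "x$k \<in> Q" unfolding xk Q_def using s'pos[of k] by simp
      hence "u (\<phi> (s k)) + c k*(x$k - \<phi> (s k)) \<le> u (x$k)" using csup by blast
      hence "c k * (x$k - q$k) \<le> ln (s' k) - ln (s k)"
        unfolding qk xk uphi[OF spos] uphi[OF s'pos] by linarith
      also have "\<dots> = ln (SIR V z k p') - ln (SIR V z k p0)"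
        unfolding s_def s'_def using SIR_pos[OF V_nonneg p'pos z_pos, of k]
          SIR_pos[OF V_nonneg p0pos z_pos, of k] \<gamma>_pos by (simp add: ln_divide_pos)
      finally show ?thesis .
    qed
    have aeq': "\<forall>j. \<alpha> j - (\<Sum>k\<in>UNIV. \<alpha> k * (V$k$j * p0$j / ((V *v p0)$k + z$k))) = C$n0$j * p0$j"
      using aeq unfolding B_def I_def d_def .
    have "w \<bullet> x - w \<bullet> q = (\<Sum>k\<in>UNIV. \<alpha> k * (c k * (x$k - q$k)))"
      unfolding inner_vec_def w_def by (simp add: sum_subtractf[symmetric] algebra_simps)
    also have "\<dots> \<le> (\<Sum>k\<in>UNIV. \<alpha> k * (ln (SIR V z k p') - ln (SIR V z k p0)))"
      by (rule sum_mono, rule mult_left_mono[OF each]) (use apos in \<open>auto intro: less_imp_le\<close>)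
    also have "\<dots> \<le> 0"
      by (rule key_sum[OF C01 V_nonneg z_pos p0pos p'pos tight p'c apos aeq'])
    finally show ?thesis by simp
  qed
  thus ?thesis using wpos by blast
qed


theorem lemma1:
  fixes \<phi> :: "real \<Rightarrow> real"
    and C :: "real^'k^'n" and phat :: "real^'n"
    and V :: "real^'k^'k" and z \<gamma> q :: "real^'k"
  assumes K2: "CARD('k) \<ge> 2"
    and C01: "\<forall>i j. C$i$j = 0 \<or> C$i$j = 1"
    and Ccol: "\<forall>j. \<exists>i. C$i$j = 1"
    and phat_pos: "\<forall>i. phat$i > 0"
    and V_nonneg: "\<forall>k l. V$k$l \<ge> 0"
    and V_diag: "\<forall>k. V$k$k = 0"
    and V_irr: "irreducible_matrix V"
    and z_pos: "\<forall>k. z$k > 0"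
    and \<gamma>_pos: "\<forall>k. \<gamma>$k > 0"
    and A2: "A2 \<phi>"
    and A3: "A3 \<phi>"
    and qF: "q \<in> feasible_region \<phi> C phat V z \<gamma>"
  shows "q \<in> feasible_boundary \<phi> C phat V z \<gamma> \<longleftrightarrow>
         (\<exists>w :: real^'k. (\<forall>k. w$k > 0) \<and>
            (\<forall>x \<in> feasible_region \<phi> C phat V z \<gamma>. w \<bullet> x \<le> w \<bullet> q))"
proof
  obtain p where pP: "p \<in> Pplus C phat" and qd: "q = qos \<phi> V z \<gamma> p"
    using qF unfolding feasible_region_def by blast
  have sm: "strict_mono_on {0<..} \<phi>" using A2 unfolding A2_def by blast
  show "q \<in> feasible_boundary \<phi> C phat V z \<gamma> \<Longrightarrow> \<exists>w :: real^'k. (\<forall>k. w$k > 0) \<and>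
            (\<forall>x \<in> feasible_region \<phi> C phat V z \<gamma>. w \<bullet> x \<le> w \<bullet> q)"
    by (rule down_direction[OF C01 phat_pos V_nonneg V_irr z_pos \<gamma>_pos sm A3])
  show "\<exists>w :: real^'k. (\<forall>k. w$k > 0) \<and>
            (\<forall>x \<in> feasible_region \<phi> C phat V z \<gamma>. w \<bullet> x \<le> w \<bullet> q) \<Longrightarrow>
         q \<in> feasible_boundary \<phi> C phat V z \<gamma>"
    using up_direction[OF C01 V_nonneg z_pos \<gamma>_pos sm pP qd] by blast
qed

end
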